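(* Let $a,b\in\mathbb{C}$ and let $q$ be a nonzero number with $\lvert q\rvert\ne1$. (1) If $0<\lvert q\rvert<1$, then for all $z$ in a neighborhood of $0$, $$\mathrm{E}_q(a,b;z)=\prod_{k=0}^\infty\frac{1+b(1-q)q^kz}{1-a(1-q)q^kz}=\frac{\mathrm{E}_{1/q}(bz)}{\mathrm{E}_{1/q}(-az)},$$ where $\mathrm{E}_{1/q}(z)=\sum_{n=0}^\infty q^{\binom n2}\frac{z^n}{[n]_q!}=\prod_{n=0}^\infty\big(1+(1-q)q^nz\big)$. (2) If $\lvert q\rvert>1$, then for all $z$ in a neighborhood of $0$, $$\mathrm{E}_q(a,b;z)=\prod_{k=0}^\infty\frac{1-a(q^{-1}-1)q^{-k}z}{1+b(q^{-1}-1)q^{-k}z}.$$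
   Context: $[n]_q=\frac{1-q^n}{1-q}$, $[0]_q!=1$, $[n]_q!=\prod_{k=1}^n[k]_q$. $(a\oplus b)^0_{1,q}=1$, $(a\oplus b)^n_{1,q}=\prod_{i=0}^{n-1}(a+bq^i)$. $\mathrm{E}_q(a,b;z)=\sum_{n=0}^\infty(a\oplus b)^n_{1,q}\frac{z^n}{[n]_q!}$ (this is the $(1,u)$-deformed $(s,t)$-exponential with $(s,t)=(1+q,-q)$ and $u=q$). *)

theory Defs
  imports "HOL-Analysis.Analysis"
begin

definition qint :: "complex \<Rightarrow> nat \<Rightarrow> complex" where
  "qint q n = (1 - q ^ n) / (1 - q)"

definition qfact :: "complex \<Rightarrow> nat \<Rightarrow> complex" where
  "qfact q n = (\<Prod>k = 1..n. qint q k)"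

definition qpow :: "complex \<Rightarrow> complex \<Rightarrow> complex \<Rightarrow> nat \<Rightarrow> complex" where
  "qpow q a b n = (\<Prod>i<n. a + b * q ^ i)"

definition Eq :: "complex \<Rightarrow> complex \<Rightarrow> complex \<Rightarrow> complex \<Rightarrow> complex" where
  "Eq q a b z = (\<Sum>n. qpow q a b n * z ^ n / qfact q n)"

text \<open>E_{1/q}(z) = sum_n q^(n choose 2) z^n / [n]_q!  (the parameter passed is q).\<close>
definition Einv :: "complex \<Rightarrow> complex \<Rightarrow> complex" where
  "Einv q z = (\<Sum>n. q ^ (n choose 2) * z ^ n / qfact q n)"

end

theory Submission imports Defs begin

lemma qpow_Suc: "qpow q a b (Suc n) = qpow q a b n * (a + b * q ^ n)"
  by (simp add: qpow_def)

lemma qfact_Suc: "qfact q (Suc n) = qfact q n * qint q (Suc n)"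
  by (simp add: qfact_def prod.nat_ivl_Suc')

lemma qint_nz: assumes "norm q \<noteq> 1" shows "qint q (Suc n) \<noteq> 0"
proof -
  have "q \<noteq> 1" using assms by auto
  moreover have "q ^ Suc n \<noteq> 1"
    using power_eq_1_iff[of q "Suc n"] assms by auto
  ultimately show ?thesis by (simp add: qint_def)
qed

lemma qfact_nz: assumes "norm q \<noteq> 1" shows "qfact q n \<noteq> 0"
  by (induction n) (auto simp: qfact_Suc qint_nz[OF assms] qfact_def)

lemma qpow_01: "qpow q 0 1 n = q ^ (n choose 2)"
proof (induction n)
  case 0 then show ?case by (simp add: qpow_def numeral_2_eq_2)
next
  case (Suc n)
  have "Suc n choose 2 = n + (n choose 2)"
    by (metis Suc_1 binomial_Suc_Suc choose_one)
  then show ?case using Suc by (simp add: qpow_Suc power_add)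
qed

lemma Einv_Eq: "Einv q w = Eq q 0 1 w"
  by (simp add: Einv_def Eq_def qpow_01)


lemma coef_rec:
  assumes "norm q \<noteq> 1"
  shows "qpow q a b (Suc n) / qfact q (Suc n) = (qpow q a b n / qfact q n) * (a + b * q ^ n) * (1 - q) / (1 - q ^ Suc n)"
proof -
  have "q \<noteq> 1" using assms by auto
  have "qint q (Suc n) \<noteq> 0" using qint_nz[OF assms] .
  then have "1 - q ^ Suc n \<noteq> 0" by (simp add: qint_def)
  then show ?thesis using \<open>q \<noteq> 1\<close> qfact_nz[OF assms, of n]
    by (simp add: qpow_Suc qfact_Suc qint_def field_simps)
qed

lemma coef_bound:
  fixes q a b :: complex
  assumes "norm q < 1"
  defines "M \<equiv> 2 * (norm a + norm b) / (1 - norm q) + 1"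
  shows "norm (qpow q a b n / qfact q n) \<le> M ^ n"
proof (induction n)
  case 0 then show ?case by (simp add: qpow_def qfact_def)
next
  case (Suc n)
  have nq: "norm q \<noteq> 1" using assms by auto
  have h1: "norm (a + b * q ^ n) \<le> norm a + norm b"
  proof -
    have "norm (b * q ^ n) \<le> norm b"
      by (simp add: norm_mult norm_power mult_left_le assms less_imp_le power_le_one)
    then show ?thesis by (meson norm_triangle_le add_left_mono)
  qed
  have h2: "norm (1 - q) \<le> 2"
    using norm_triangle_ineq4[of 1 q] assms by simp
  have h3: "1 - norm q \<le> norm (1 - q ^ Suc n)"
  proof -
    have "norm (q ^ Suc n) \<le> norm q"
    proof -
      have "norm q ^ n \<le> 1" using assms by (simp add: less_imp_le power_le_one)
      then have "norm q * norm q ^ n \<le> norm q" using mult_left_le[of "norm q ^ n" "norm q"] by simp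
      then show ?thesis by (simp add: norm_mult norm_power)
    qed
    moreover have "1 - norm (q ^ Suc n) \<le> norm (1 - q ^ Suc n)"
      using norm_triangle_ineq2[of 1 "q ^ Suc n"] by simp
    ultimately show ?thesis by linarith
  qed
  have pos: "0 < 1 - norm q" using assms by simp
  have M1: "1 \<le> M" unfolding M_def using pos by simp
  have "norm (qpow q a b (Suc n) / qfact q (Suc n)) =
        norm (qpow q a b n / qfact q n) * (norm (a + b * q ^ n) * norm (1 - q) / norm (1 - q ^ Suc n))"
    by (simp add: coef_rec[OF nq] norm_mult norm_divide)
  also have "\<dots> \<le> M ^ n * (2 * (norm a + norm b) / (1 - norm q))"
  proof (rule mult_mono[OF Suc])
    have "norm (a + b * q ^ n) * norm (1 - q) / norm (1 - q ^ Suc n) \<le> (norm a + norm b) * 2 / norm (1 - q ^ Suc n)"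
      by (intro divide_right_mono mult_mono h1 h2) auto
    also have "\<dots> \<le> (norm a + norm b) * 2 / (1 - norm q)"
      using h3 pos by (intro divide_left_mono h3 pos mult_nonneg_nonneg mult_pos_pos) auto
    finally show "norm (a + b * q ^ n) * norm (1 - q) / norm (1 - q ^ Suc n) \<le> 2 * (norm a + norm b) / (1 - norm q)"
      by (simp add: mult.commute)
  next
    show "0 \<le> M ^ n" using M1 by simp
  next
    show "0 \<le> norm (a + b * q ^ n) * norm (1 - q) / norm (1 - q ^ Suc n)" by simp
  qed
  also have "\<dots> \<le> M ^ n * M"
    using M1 by (intro mult_left_mono) (auto simp: M_def)
  finally show ?case by (simp add: mult.commute)
qed


lemma qbin_prod:
  fixes a b q :: complex
  assumes q1: "norm q < 1"
  shows "\<exists>r>0. \<forall>z. norm z < r \<longrightarrow>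
    raw_has_prod (\<lambda>k. (1 + b * (1 - q) * q ^ k * z) / (1 - a * (1 - q) * q ^ k * z)) 0 (Eq q a b z)"
proof -
  define C where "C n = qpow q a b n / qfact q n" for n
  define M where "M = 2 * (norm a + norm b) / (1 - norm q) + 1"
  define R where "R = 1 / (2*M)"
  define G where "G w = (\<Sum>n. C n * w ^ n)" for w
  have nq: "norm q \<noteq> 1" using q1 by simp
  have pos: "0 < 1 - norm q" using q1 by simp
  have M1: "1 \<le> M" unfolding M_def using pos by simp
  have R0: "0 < R" using M1 by (simp add: R_def)
  have MR: "M * R = 1/2" using M1 by (simp add: R_def)
  have aM: "norm a * norm (1 - q) \<le> M" "norm b * norm (1 - q) \<le> M"
  proof -
    have h2: "norm (1 - q) \<le> 2"
      using norm_triangle_ineq4[of 1 q] q1 by simp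
    have "2 * (norm a + norm b) \<le> 2 * (norm a + norm b) / (1 - norm q)"
    proof -
      have "2 * (norm a + norm b) * (1 - norm q) \<le> 2 * (norm a + norm b)"
        by (rule mult_left_le) (use pos in auto)
      then show ?thesis using pos by (simp add: le_divide_eq)
    qed
    then have "2 * (norm a + norm b) \<le> M" unfolding M_def by simp
    moreover have "norm a * norm (1 - q) \<le> norm a * 2" "norm b * norm (1 - q) \<le> norm b * 2"
      using h2 by (simp_all add: mult_left_mono)
    ultimately have "norm a * norm (1 - q) \<le> M \<and> norm b * norm (1 - q) \<le> M"
      using norm_ge_zero[of a] norm_ge_zero[of b] by argo
    then show "norm a * norm (1 - q) \<le> M" by simp
    from \<open>_ \<and> _\<close> show "norm b * norm (1 - q) \<le> M" by simp
  qed
  have Cb: "norm (C n) \<le> M ^ n" for n unfolding C_def M_def by (rule coef_bound[OF q1])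
  have summ: "summable (\<lambda>n. C n * w ^ n)" if "norm w \<le> R" for w
  proof (rule summable_comparison_test[OF _ summable_geometric[of "1/2::real"]])
    show "\<exists>N. \<forall>n\<ge>N. norm (C n * w ^ n) \<le> (1/2) ^ n"
    proof (intro exI allI impI)
      fix n :: nat
      have "norm (C n * w^n) = norm (C n) * norm w ^ n" by (simp add: norm_mult norm_power)
      also have "\<dots> \<le> M^n * R^n" using M1 by (intro mult_mono Cb power_mono that) auto
      also have "\<dots> = (1/2)^n" by (simp only: power_mult_distrib[symmetric] MR)
      finally show "norm (C n * w ^ n) \<le> (1/2)^n" .
    qed
  qed simp
  have G0: "G 0 = 1" unfolding G_def powser_zero by (simp add: C_def qpow_def qfact_def)
  have cont: "isCont G 0"
    unfolding G_def[abs_def]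
    by (rule isCont_powser[of _ "of_real R"]) (use summ R0 in auto)
  have EqG: "Eq q a b w = G w" for w by (simp add: Eq_def G_def C_def)
  have Crec: "C (Suc n) * (1 - q ^ Suc n) = C n * (a + b * q ^ n) * (1 - q)" for n
  proof -
    have "1 - q ^ Suc n \<noteq> 0" using qint_nz[OF nq, of n] by (simp add: qint_def)
    then show ?thesis unfolding C_def using coef_rec[OF nq, of a b n] by simp
  qed
  have feq: "G w * (1 - a * (1 - q) * w) = G (q * w) * (1 + b * (1 - q) * w)" if w: "norm w \<le> R" for w
  proof -
    have qw: "norm (q * w) \<le> R"
    proof -
      have "norm (q * w) = norm q * norm w" by (simp add: norm_mult)
      also have "\<dots> \<le> norm w" using q1 by (simp add: mult_left_le_one_le)
      finally show ?thesis using w by linarith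
    qed
    have s1: "(\<lambda>n. C n * w ^ n) sums G w" using summ[OF w] by (simp add: G_def summable_sums)
    have s2: "(\<lambda>n. C n * (q*w) ^ n) sums G (q*w)" using summ[OF qw] by (simp add: G_def summable_sums)
    have "(\<lambda>n. C n * w ^ n - C n * (q*w)^n) sums (G w - G (q*w))" by (rule sums_diff[OF s1 s2])
    then have 1: "(\<lambda>n. C (Suc n) * w ^ Suc n - C (Suc n) * (q*w)^Suc n) sums (G w - G (q*w))"
      by (subst sums_Suc_iff) simp
    have 2: "(\<lambda>n. C (Suc n) * w ^ Suc n - C (Suc n) * (q*w)^Suc n) = (\<lambda>n. (1-q)*w*(a * (C n * w^n) + b * (C n * (q*w)^n)))"
    proof
      fix n
      have "C (Suc n) * w ^ Suc n - C (Suc n) * (q*w)^Suc n = (C (Suc n) * (1 - q^Suc n)) * w^Suc n"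
        by (simp add: power_mult_distrib algebra_simps)
      also have "\<dots> = C n * (a + b*q^n) * (1-q) * w^Suc n" using Crec by simp
      also have "\<dots> = (1-q)*w*(a * (C n * w^n) + b * (C n * (q*w)^n))"
        by (simp add: power_mult_distrib algebra_simps)
      finally show "C (Suc n) * w ^ Suc n - C (Suc n) * (q*w)^Suc n = (1-q)*w*(a * (C n * w^n) + b * (C n * (q*w)^n))" .
    qed
    have 3: "(\<lambda>n. (1-q)*w*(a * (C n * w^n) + b * (C n * (q*w)^n))) sums ((1-q)*w*(a * G w + b * G (q*w)))"
      by (intro sums_mult sums_add s1 s2)
    have "G w - G (q*w) = (1-q)*w*(a * G w + b * G (q*w))" using sums_unique2[OF 1[unfolded 2] 3] .
    then show ?thesis by (simp add: algebra_simps)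
  qed
  show ?thesis
  proof (intro exI[of _ R] conjI allI impI R0)
    fix z :: complex assume z: "norm z < R"
    define F where "F k = (1 + b * (1 - q) * q ^ k * z) / (1 - a * (1 - q) * q ^ k * z)" for k
    have qkz: "norm (q^k * z) \<le> norm z" for k
    proof -
      have "norm q ^ k \<le> 1" using q1 by (simp add: power_le_one)
      then show ?thesis by (simp add: norm_mult norm_power mult_left_le_one_le)
    qed
    have nz: "1 + c * (q^k * z) \<noteq> 0" if c: "norm c \<le> M" for c k
    proof
      assume "1 + c * (q^k * z) = 0"
      then have "c * (q^k * z) = -1" by (simp add: algebra_simps eq_neg_iff_add_eq_0)
      then have "norm (c * (q^k * z)) = 1" by simp
      then have "norm c * norm (q^k * z) = 1" by (simp only: norm_mult)
      moreover have "norm c * norm (q^k * z) \<le> M * R"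
        using qkz[of k] z c M1 by (intro mult_mono) auto
      ultimately show False using MR by linarith
    qed
    have den: "1 - a * (1 - q) * q ^ k * z \<noteq> 0" for k
    proof -
      have "norm (- a * (1 - q)) \<le> M" using aM by (simp add: norm_mult)
      then have "1 + (- a * (1 - q)) * (q^k * z) \<noteq> 0" by (rule nz)
      moreover have "1 - a * (1 - q) * q ^ k * z = 1 + (- a * (1 - q)) * (q^k * z)" by (simp add: algebra_simps)
      ultimately show ?thesis by metis
    qed
    have num: "1 + b * (1 - q) * q ^ k * z \<noteq> 0" for k
    proof -
      have "norm (b * (1 - q)) \<le> M" using aM by (simp add: norm_mult)
      then have "1 + (b * (1 - q)) * (q^k * z) \<noteq> 0" by (rule nz)
      moreover have "1 + b * (1 - q) * q ^ k * z = 1 + (b * (1 - q)) * (q^k * z)" by (simp add: algebra_simps)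
      ultimately show ?thesis by metis
    qed
    have Fnz: "F k \<noteq> 0" for k using den num by (simp add: F_def)
    have iter: "G z = G (q^N * z) * (\<Prod>k<N. F k)" for N
    proof (induction N)
      case 0 show ?case by simp
    next
      case (Suc N)
      have w: "norm (q^N*z) \<le> R" using qkz[of N] z by linarith
      have "G (q^N*z) * (1 - a*(1-q)*(q^N*z)) = G (q * (q^N*z)) * (1 + b*(1-q)*(q^N*z))" by (rule feq[OF w])
      then have "G (q^N*z) = G (q^Suc N * z) * F N" using den[of N] unfolding F_def
        by (simp add: field_simps)
      then show ?case using Suc by (simp add: mult.assoc)
    qed
    have lim: "(\<lambda>N. G (q^N * z)) \<longlonglongrightarrow> 1"
    proof -
      have "(\<lambda>N. q^N * z) \<longlonglongrightarrow> 0" using q1 by (intro tendsto_mult_left_zero LIMSEQ_power_zero)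
      from isCont_tendsto_compose[OF cont this] show ?thesis by (simp add: G0)
    qed
    have Gz: "G z \<noteq> 0"
    proof
      assume "G z = 0"
      then have "G (q^N*z) = 0" for N using iter[of N] Fnz by simp
      then have "(\<lambda>N. G (q^N * z)) \<longlonglongrightarrow> 0" by simp
      from LIMSEQ_unique[OF lim this] show False by simp
    qed
    have ev: "eventually (\<lambda>N. G z / G (q^N*z) = (\<Prod>k<N. F k)) sequentially"
      using tendsto_imp_eventually_ne[OF lim, of 0]
      by (rule eventually_mono) (use iter in \<open>auto simp: field_simps\<close>)
    have "(\<lambda>N. G z / G (q^N*z)) \<longlonglongrightarrow> G z / 1"
      by (intro tendsto_divide tendsto_const lim) simp
    then have "(\<lambda>N. \<Prod>k<N. F k) \<longlonglongrightarrow> G z" using Lim_transform_eventually[OF _ ev] by simp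
    then have "(\<lambda>n. \<Prod>k<Suc n. F k) \<longlonglongrightarrow> G z" by (rule LIMSEQ_Suc)
    then have "(\<lambda>n. \<Prod>k\<le>n. F k) \<longlonglongrightarrow> G z" by (simp add: lessThan_Suc_atMost)
    then show "raw_has_prod (\<lambda>k. (1 + b * (1 - q) * q ^ k * z) / (1 - a * (1 - q) * q ^ k * z)) 0 (Eq q a b z)"
      unfolding raw_has_prod_def EqG using Gz by (simp add: F_def)
  qed
qed


lemma coef_inv:
  fixes q :: complex
  assumes q1: "norm q > 1"
  shows "qpow q a b n / qfact q n = qpow (inverse q) b a n / qfact (inverse q) n"
proof (induction n)
  case 0 then show ?case by (simp add: qpow_def qfact_def)
next
  case (Suc n)
  define p where "p = inverse q"
  have nq: "norm q \<noteq> 1" using q1 by simp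
  have np: "norm p \<noteq> 1" using q1 by (simp add: p_def norm_inverse)
  have q0: "q \<noteq> 0" using q1 by auto
  have d1: "1 - q ^ Suc n \<noteq> 0" using qint_nz[OF nq, of n] by (simp add: qint_def)
  have d2: "q ^ Suc n - 1 \<noteq> 0" using d1 by (simp add: right_minus_eq)
  have X: "(a + b * q ^ n) * (1 - q) / (1 - q ^ Suc n) = (b + a * p ^ n) * (1 - p) / (1 - p ^ Suc n)"
    using q0 d1 d2 unfolding p_def power_inverse
    by (simp add: field_simps)
  have e1: "qpow q a b (Suc n) / qfact q (Suc n) = (qpow q a b n / qfact q n) * ((a + b * q ^ n) * (1 - q) / (1 - q ^ Suc n))"
    unfolding coef_rec[OF nq] by (simp only: mult.assoc times_divide_eq_right)
  have e2: "qpow p b a (Suc n) / qfact p (Suc n) = (qpow p b a n / qfact p n) * ((b + a * p ^ n) * (1 - p) / (1 - p ^ Suc n))"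
    unfolding coef_rec[OF np] by (simp only: mult.assoc times_divide_eq_right)
  show ?case using Suc.IH unfolding p_def[symmetric] e1 e2 X by simp
qed

lemma Eq_inv: assumes "norm q > 1" shows "Eq q a b z = Eq (inverse q) b a z"
proof -
  have "qpow q a b n * z ^ n / qfact q n = qpow (inverse q) b a n * z ^ n / qfact (inverse q) n" for n
  proof -
    have "qpow q a b n * z ^ n / qfact q n = (qpow q a b n / qfact q n) * z ^ n" by simp
    also have "\<dots> = (qpow (inverse q) b a n / qfact (inverse q) n) * z ^ n" by (simp only: coef_inv[OF assms])
    also have "\<dots> = qpow (inverse q) b a n * z ^ n / qfact (inverse q) n" by simp
    finally show ?thesis .
  qed
  then show ?thesis unfolding Eq_def by simp
qed


theorem mainTheorem14:
  fixes a b q :: complex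
  assumes "q \<noteq> 0" and "norm q \<noteq> 1"
  shows "(norm q < 1 \<longrightarrow>
            (\<forall>\<^sub>F z in nhds 0.
               ((\<lambda>k. (1 + b * (1 - q) * q ^ k * z) / (1 - a * (1 - q) * q ^ k * z))
                  has_prod Eq q a b z) \<and>
               Eq q a b z = Einv q (b * z) / Einv q (- a * z) \<and>
               ((\<lambda>n. 1 + (1 - q) * q ^ n * z) has_prod Einv q z))) \<and>
         (norm q > 1 \<longrightarrow>
            (\<forall>\<^sub>F z in nhds 0.
               (\<lambda>k. (1 - a * (inverse q - 1) * (inverse q) ^ k * z) /
                     (1 + b * (inverse q - 1) * (inverse q) ^ k * z))
                  has_prod Eq q a b z))"
proof (intro conjI impI)
  assume q1: "norm q < 1"
  obtain r where r: "r > 0" "\<And>z. norm z < r \<Longrightarrow>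
    raw_has_prod (\<lambda>k. (1 + b * (1 - q) * q ^ k * z) / (1 - a * (1 - q) * q ^ k * z)) 0 (Eq q a b z)"
    using qbin_prod[OF q1, of b a] by blast
  obtain r1 where r1: "r1 > 0" "\<And>z. norm z < r1 \<Longrightarrow>
    raw_has_prod (\<lambda>k. (1 + 1 * (1 - q) * q ^ k * z) / (1 - 0 * (1 - q) * q ^ k * z)) 0 (Eq q 0 1 z)"
    using qbin_prod[OF q1, of 1 0] by blast
  have E1: "raw_has_prod (\<lambda>n. 1 + (1 - q) * q ^ n * w) 0 (Einv q w)" if "norm w < r1" for w
    using r1(2)[OF that] by (simp add: Einv_Eq)
  define K where "K = norm a + norm b + 1"
  have K1: "K \<ge> 1" by (simp add: K_def)
  define d where "d = min r r1 / K"
  have d0: "d > 0" using r r1 K1 by (simp add: d_def)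
  show "\<forall>\<^sub>F z in nhds 0.
               ((\<lambda>k. (1 + b * (1 - q) * q ^ k * z) / (1 - a * (1 - q) * q ^ k * z))
                  has_prod Eq q a b z) \<and>
               Eq q a b z = Einv q (b * z) / Einv q (- a * z) \<and>
               ((\<lambda>n. 1 + (1 - q) * q ^ n * z) has_prod Einv q z)"
    unfolding eventually_nhds_metric
  proof (intro exI[of _ d] conjI allI impI d0)
    fix z :: complex assume "dist z 0 < d"
    then have zd: "norm z < d" by simp
    have zK: "K * norm z < min r r1" using zd K1 by (simp add: d_def field_simps)
    have "norm z \<le> K * norm z" using K1 by (simp add: mult_le_cancel_right1)
    then have zr: "norm z < r" "norm z < r1" using zK by linarith+
    have "norm (b * z) \<le> K * norm z" unfolding K_def norm_mult
      by (intro mult_right_mono) auto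
    then have bz: "norm (b * z) < r1" using zK by linarith
    have "norm (- a * z) \<le> K * norm z" unfolding K_def norm_mult norm_minus_cancel
      by (intro mult_right_mono) auto
    then have az: "norm (- a * z) < r1" using zK by linarith
    have P: "raw_has_prod (\<lambda>k. (1 + b * (1 - q) * q ^ k * z) / (1 - a * (1 - q) * q ^ k * z)) 0 (Eq q a b z)"
      using r(2)[OF zr(1)] .
    then show "(\<lambda>k. (1 + b * (1 - q) * q ^ k * z) / (1 - a * (1 - q) * q ^ k * z)) has_prod Eq q a b z"
      by (simp add: has_prod_def)
    show "(\<lambda>n. 1 + (1 - q) * q ^ n * z) has_prod Einv q z"
      using E1[OF zr(2)] by (simp add: has_prod_def)
    have Nb: "raw_has_prod (\<lambda>n. 1 + (1 - q) * q ^ n * (b * z)) 0 (Einv q (b * z))" using E1[OF bz] .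
    have Na: "raw_has_prod (\<lambda>n. 1 + (1 - q) * q ^ n * (- a * z)) 0 (Einv q (- a * z))" using E1[OF az] .
    have "(\<lambda>n. (\<Prod>i\<le>n. 1 + (1 - q) * q ^ i * (b * z)) / (\<Prod>i\<le>n. 1 + (1 - q) * q ^ i * (- a * z)))
          \<longlonglongrightarrow> Einv q (b * z) / Einv q (- a * z)"
      using Nb Na unfolding raw_has_prod_def by (intro tendsto_divide) auto
    moreover have "(\<lambda>n. (\<Prod>i\<le>n. 1 + (1 - q) * q ^ i * (b * z)) / (\<Prod>i\<le>n. 1 + (1 - q) * q ^ i * (- a * z)))
       = (\<lambda>n. \<Prod>i\<le>n. (1 + b * (1 - q) * q ^ i * z) / (1 - a * (1 - q) * q ^ i * z))"
      by (simp add: prod_dividef algebra_simps)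
    moreover have "(\<lambda>n. \<Prod>i\<le>n. (1 + b * (1 - q) * q ^ i * z) / (1 - a * (1 - q) * q ^ i * z)) \<longlonglongrightarrow> Eq q a b z"
      using P unfolding raw_has_prod_def by simp
    ultimately show "Eq q a b z = Einv q (b * z) / Einv q (- a * z)"
      using LIMSEQ_unique by simp
  qed
next
  assume q1: "norm q > 1"
  define p where "p = inverse q"
  have p1: "norm p < 1" using q1 by (simp add: p_def norm_inverse inverse_less_1_iff)
  obtain r where r: "r > 0" "\<And>z. norm z < r \<Longrightarrow>
    raw_has_prod (\<lambda>k. (1 + a * (1 - p) * p ^ k * z) / (1 - b * (1 - p) * p ^ k * z)) 0 (Eq p b a z)"
    using qbin_prod[OF p1, of a b] by blast
  show "\<forall>\<^sub>F z in nhds 0.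
               (\<lambda>k. (1 - a * (inverse q - 1) * (inverse q) ^ k * z) /
                     (1 + b * (inverse q - 1) * (inverse q) ^ k * z))
                  has_prod Eq q a b z"
    unfolding eventually_nhds_metric
  proof (intro exI[of _ r] conjI allI impI r(1))
    fix z :: complex assume "dist z 0 < r"
    then have "norm z < r" by simp
    from r(2)[OF this] have "raw_has_prod (\<lambda>k. (1 - a * (p - 1) * p ^ k * z) / (1 + b * (p - 1) * p ^ k * z)) 0 (Eq q a b z)"
      using Eq_inv[OF q1, of a b z] unfolding p_def[symmetric] by (simp add: algebra_simps)
    then show "(\<lambda>k. (1 - a * (inverse q - 1) * (inverse q) ^ k * z) /
                     (1 + b * (inverse q - 1) * (inverse q) ^ k * z)) has_prod Eq q a b z"
      by (simp add: has_prod_def p_def)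
  qed
qed

end
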